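(* Let $T:\mathcal{A}\to\mathcal{A}$ be a Markov operator on a von Neumann algebra $\mathcal{A}\subseteq\mathcal{B}(\mathcal{H})$ and $a\in\mathcal{A}_+$ with $T(a)\le a$. Then the support projection $p=\operatorname{supp}a$ satisfies $T(p)\le p$.
   Context: A Markov operator is a normal completely positive unital linear map on $\mathcal{A}$ ($\mathbbm{1}\in\mathcal{A}$). For self-adjoint $a\in\mathcal{A}$, $\operatorname{supp}a$ is the smallest projection $q\in\mathcal{A}$ with $a=qaq$. *)

theory Defs
  imports "HOL-Analysis.Analysis"
begin

typedef 'i ell2 = "{f :: 'i \<Rightarrow> complex. (\<lambda>i. (cmod (f i))^2) summable_on UNIV}"
  morphisms ell2_vec Ell2
  by (rule exI[of _ "\<lambda>_. 0"]) simp

definition ell2_add :: "'i ell2 \<Rightarrow> 'i ell2 \<Rightarrow> 'i ell2" where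
  "ell2_add x y = Ell2 (\<lambda>i. ell2_vec x i + ell2_vec y i)"

definition ell2_scale :: "complex \<Rightarrow> 'i ell2 \<Rightarrow> 'i ell2" where
  "ell2_scale c x = Ell2 (\<lambda>i. c * ell2_vec x i)"

definition ell2_zero :: "'i ell2" where
  "ell2_zero = Ell2 (\<lambda>_. 0)"

definition ell2_inner :: "'i ell2 \<Rightarrow> 'i ell2 \<Rightarrow> complex" where
  "ell2_inner x y = (\<Sum>\<^sub>\<infinity>i. cnj (ell2_vec x i) * ell2_vec y i)"

definition ell2_norm :: "'i ell2 \<Rightarrow> real" where
  "ell2_norm x = sqrt (Re (ell2_inner x x))"

type_synonym 'i op = "'i ell2 \<Rightarrow> 'i ell2"

definition bounded_op :: "'i op \<Rightarrow> bool" where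
  "bounded_op X \<longleftrightarrow>
     (\<forall>x y. X (ell2_add x y) = ell2_add (X x) (X y)) \<and>
     (\<forall>c x. X (ell2_scale c x) = ell2_scale c (X x)) \<and>
     (\<exists>K. \<forall>x. ell2_norm (X x) \<le> K * ell2_norm x)"

definition BH :: "'i op set" where
  "BH = {X. bounded_op X}"

definition op_add :: "'i op \<Rightarrow> 'i op \<Rightarrow> 'i op" where
  "op_add X Y = (\<lambda>x. ell2_add (X x) (Y x))"

definition op_scale :: "complex \<Rightarrow> 'i op \<Rightarrow> 'i op" where
  "op_scale c X = (\<lambda>x. ell2_scale c (X x))"

definition op_minus :: "'i op \<Rightarrow> 'i op \<Rightarrow> 'i op" where
  "op_minus X Y = op_add X (op_scale (-1) Y)"

definition adj :: "'i op \<Rightarrow> 'i op" where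
  "adj X = (SOME Y. Y \<in> BH \<and> (\<forall>x y. ell2_inner (X x) y = ell2_inner x (Y y)))"

definition cnonneg :: "complex \<Rightarrow> bool" where
  "cnonneg c \<longleftrightarrow> Im c = 0 \<and> 0 \<le> Re c"

definition op_pos :: "'i op \<Rightarrow> bool" where
  "op_pos X \<longleftrightarrow> (\<forall>x. cnonneg (ell2_inner x (X x)))"

definition op_le :: "'i op \<Rightarrow> 'i op \<Rightarrow> bool" where
  "op_le X Y \<longleftrightarrow> op_pos (op_minus Y X)"

definition commutant :: "'i op set \<Rightarrow> 'i op set" where
  "commutant S = {Y \<in> BH. \<forall>X\<in>S. X \<circ> Y = Y \<circ> X}"

definition von_neumann_algebra :: "'i op set \<Rightarrow> bool" where
  "von_neumann_algebra A \<longleftrightarrow>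
     A \<subseteq> BH \<and> id \<in> A \<and>
     (\<forall>X\<in>A. \<forall>Y\<in>A. op_add X Y \<in> A \<and> X \<circ> Y \<in> A) \<and>
     (\<forall>c. \<forall>X\<in>A. op_scale c X \<in> A) \<and>
     (\<forall>X\<in>A. adj X \<in> A) \<and>
     commutant (commutant A) = A"

definition is_projection :: "'i op \<Rightarrow> bool" where
  "is_projection P \<longleftrightarrow> P \<in> BH \<and> P \<circ> P = P \<and> adj P = P"

definition is_support :: "'i op set \<Rightarrow> 'i op \<Rightarrow> 'i op \<Rightarrow> bool" where
  "is_support A a p \<longleftrightarrow>
     p \<in> A \<and> is_projection p \<and> a = p \<circ> a \<circ> p \<and>
     (\<forall>q\<in>A. is_projection q \<and> a = q \<circ> a \<circ> q \<longrightarrow> op_le p q)"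

text \<open>Positivity of an n x n operator matrix acting on H^n.\<close>
definition matrix_pos :: "nat \<Rightarrow> (nat \<Rightarrow> nat \<Rightarrow> 'i op) \<Rightarrow> bool" where
  "matrix_pos n M \<longleftrightarrow>
     (\<forall>\<xi> :: nat \<Rightarrow> 'i ell2. cnonneg (\<Sum>i<n. \<Sum>j<n. ell2_inner (\<xi> i) (M i j (\<xi> j))))"

definition completely_positive :: "'i op set \<Rightarrow> ('i op \<Rightarrow> 'i op) \<Rightarrow> bool" where
  "completely_positive A T \<longleftrightarrow>
     (\<forall>n M. (\<forall>i<n. \<forall>j<n. M i j \<in> A) \<and> matrix_pos n M \<longrightarrow> matrix_pos n (\<lambda>i j. T (M i j)))"

definition op_is_lub :: "'i op set \<Rightarrow> 'i op \<Rightarrow> bool" where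
  "op_is_lub S s \<longleftrightarrow> s \<in> BH \<and> (\<forall>x\<in>S. op_le x s) \<and>
     (\<forall>b\<in>BH. (\<forall>x\<in>S. op_le x b) \<longrightarrow> op_le s b)"

text \<open>Normal: preserves suprema of bounded increasing nets (directed sets) of positive elements.\<close>
definition normal_map :: "'i op set \<Rightarrow> ('i op \<Rightarrow> 'i op) \<Rightarrow> bool" where
  "normal_map A T \<longleftrightarrow>
     (\<forall>D. D \<subseteq> A \<and> D \<noteq> {} \<and> (\<forall>x\<in>D. op_pos x) \<and>
          (\<forall>x\<in>D. \<forall>y\<in>D. \<exists>z\<in>D. op_le x z \<and> op_le y z) \<and>
          (\<exists>b\<in>BH. \<forall>x\<in>D. op_le x b)
        \<longrightarrow> (\<forall>s. op_is_lub D s \<longrightarrow> op_is_lub (T ` D) (T s)))"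

definition markov_operator :: "'i op set \<Rightarrow> ('i op \<Rightarrow> 'i op) \<Rightarrow> bool" where
  "markov_operator A T \<longleftrightarrow>
     (\<forall>x\<in>A. T x \<in> A) \<and>
     (\<forall>x\<in>A. \<forall>y\<in>A. T (op_add x y) = op_add (T x) (T y)) \<and>
     (\<forall>c. \<forall>x\<in>A. T (op_scale c x) = op_scale c (T x)) \<and>
     T id = id \<and> completely_positive A T \<and> normal_map A T"

end

theory Submission
  imports Defs
begin


definition l2 :: "('i \<Rightarrow> complex) \<Rightarrow> bool" where
  "l2 f \<longleftrightarrow> (\<lambda>i. (cmod (f i))^2) summable_on UNIV"

lemma l2_vec[simp]: "l2 (ell2_vec x)"
  using ell2_vec[of x] by (simp add: l2_def)

lemma Ell2_inv[simp]: "l2 f \<Longrightarrow> ell2_vec (Ell2 f) = f"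
  by (simp add: Ell2_inverse l2_def)

lemma ell2_eqI: "(\<And>i. ell2_vec x i = ell2_vec y i) \<Longrightarrow> x = y"
  by (metis ell2_vec_inject ext)

lemma sq_ineq: "(a+b)^2 \<le> 2*a^2 + 2*(b::real)^2"
proof -
  have "(2*a^2 + 2*b^2) - (a+b)^2 = (a-b)^2" by (simp add: power2_eq_square algebra_simps)
  thus ?thesis using zero_le_power2[of "a-b"] by linarith
qed

lemma sq_ineq2: "2*(a*b) \<le> a^2 + (b::real)^2"
proof -
  have "(a^2 + b^2) - 2*(a*b) = (a-b)^2" by (simp add: power2_eq_square algebra_simps)
  thus ?thesis using zero_le_power2[of "a-b"] by linarith
qed

lemma l2_add: assumes "l2 f" "l2 g" shows "l2 (\<lambda>i. f i + g i)"
proof -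
  have s: "(\<lambda>i. 2 * (cmod (f i))^2 + 2 * (cmod (g i))^2) summable_on UNIV"
    using assms unfolding l2_def by (intro summable_on_add summable_on_cmult_right) auto
  have "(cmod (f i + g i))^2 \<le> 2 * (cmod (f i))^2 + 2 * (cmod (g i))^2" for i
  proof -
    have "cmod (f i + g i) \<le> cmod (f i) + cmod (g i)" by (rule norm_triangle_ineq)
    hence "(cmod (f i + g i))^2 \<le> (cmod (f i) + cmod (g i))^2"
      by (simp add: power_mono)
    also have "\<dots> \<le> 2 * (cmod (f i))^2 + 2 * (cmod (g i))^2"
      by (rule sq_ineq)
    finally show ?thesis .
  qed
  then show ?thesis unfolding l2_def
    by (intro summable_on_comparison_test[OF s]) auto
qed

lemma l2_scale: assumes "l2 f" shows "l2 (\<lambda>i. c * f i)"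
proof -
  have "(\<lambda>i. (cmod c)^2 * (cmod (f i))^2) summable_on UNIV"
    using assms unfolding l2_def by (intro summable_on_cmult_right) auto
  then show ?thesis unfolding l2_def by (simp add: norm_mult power_mult_distrib)
qed

lemma l2_zero[simp]: "l2 (\<lambda>_. 0)" by (simp add: l2_def)

lemma l2_prod_abs: assumes "l2 f" "l2 g" shows "(\<lambda>i. norm (cnj (f i) * g i)) summable_on UNIV"
proof -
  have s: "(\<lambda>i. (cmod (f i))^2 + (cmod (g i))^2) summable_on UNIV"
    using assms unfolding l2_def by (intro summable_on_add) auto
  have "norm (cnj (f i) * g i) \<le> (cmod (f i))^2 + (cmod (g i))^2" for i
  proof -
    have "norm (cnj (f i) * g i) = cmod (f i) * cmod (g i)" by (simp add: norm_mult)
    also have "\<dots> \<le> (cmod (f i))^2 + (cmod (g i))^2"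
      using sq_ineq2[of "cmod (f i)" "cmod (g i)"] norm_ge_zero[of "f i"] norm_ge_zero[of "g i"]
        zero_le_power2[of "cmod (f i)"] zero_le_power2[of "cmod (g i)"] by linarith
    finally show ?thesis .
  qed
  then show ?thesis
    by (intro summable_on_comparison_test[OF s]) auto
qed

lemma l2_prod: assumes "l2 f" "l2 g" shows "(\<lambda>i. cnj (f i) * g i) summable_on UNIV"
  using l2_prod_abs[OF assms] by (rule abs_summable_summable)

lemma vec_add[simp]: "ell2_vec (ell2_add x y) i = ell2_vec x i + ell2_vec y i"
  unfolding ell2_add_def by (subst Ell2_inv) (auto intro: l2_add)
lemma vec_scale[simp]: "ell2_vec (ell2_scale c x) i = c * ell2_vec x i"
  unfolding ell2_scale_def by (subst Ell2_inv) (auto intro: l2_scale)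
lemma vec_zero[simp]: "ell2_vec ell2_zero i = 0"
  unfolding ell2_zero_def by simp

lemma inner_add_left_c0: "ell2_inner (ell2_add x y) z = ell2_inner x z + ell2_inner y z"
  unfolding ell2_inner_def by (simp add: distrib_right infsum_add l2_prod)

lemma inner_add_right_c0: "ell2_inner x (ell2_add y z) = ell2_inner x y + ell2_inner x z"
  unfolding ell2_inner_def by (simp add: distrib_left infsum_add l2_prod)

lemma inner_scale_left_c: "ell2_inner (ell2_scale c x) y = cnj c * ell2_inner x y"
  unfolding ell2_inner_def by (simp add: mult.assoc infsum_cmult_right l2_prod)

lemma inner_scale_right_c: "ell2_inner x (ell2_scale c y) = c * ell2_inner x y"
proof -
  have "ell2_inner x (ell2_scale c y) = (\<Sum>\<^sub>\<infinity>i. c * (cnj (ell2_vec x i) * ell2_vec y i))"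
    unfolding ell2_inner_def by (simp add: algebra_simps)
  also have "\<dots> = c * ell2_inner x y" unfolding ell2_inner_def by (simp add: infsum_cmult_right l2_prod)
  finally show ?thesis .
qed

lemma inner_cnj_c: "ell2_inner y x = cnj (ell2_inner x y)"
  unfolding ell2_inner_def by (simp flip: infsum_cnj add: mult.commute)

lemma infsum_of_real': "f summable_on A \<Longrightarrow> (\<Sum>\<^sub>\<infinity>x\<in>A. complex_of_real (f x)) = complex_of_real (infsum f A)"
  by (rule infsumI, subst has_sum_of_real_iff, rule has_sum_infsum)

lemma inner_self_c: "ell2_inner x x = complex_of_real (\<Sum>\<^sub>\<infinity>i. (cmod (ell2_vec x i))^2)"
proof -
  have "ell2_inner x x = (\<Sum>\<^sub>\<infinity>i. complex_of_real ((cmod (ell2_vec x i))^2))"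
    unfolding ell2_inner_def by (intro infsum_cong) (metis complex_norm_square mult.commute)
  also have "\<dots> = complex_of_real (\<Sum>\<^sub>\<infinity>i. (cmod (ell2_vec x i))^2)"
    using l2_vec[of x] unfolding l2_def by (rule infsum_of_real')
  finally show ?thesis .
qed

lemma inner_self_nonneg0: "0 \<le> Re (ell2_inner x x)"
  unfolding inner_self_c by (simp add: infsum_nonneg)

lemma inner_self_zero0: "Re (ell2_inner x x) = 0 \<Longrightarrow> x = ell2_zero"
proof -
  assume "Re (ell2_inner x x) = 0"
  hence "(\<Sum>\<^sub>\<infinity>i. (cmod (ell2_vec x i))^2) = 0" unfolding inner_self_c by simp
  hence "(cmod (ell2_vec x i))^2 = 0" for i
    using nonneg_infsum_le_0D[of "\<lambda>i. (cmod (ell2_vec x i))^2" UNIV i] l2_vec[of x]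
    unfolding l2_def by simp
  thus "x = ell2_zero" by (intro ell2_eqI) simp
qed

lemma inner_zero0: "ell2_inner ell2_zero ell2_zero = 0"
  unfolding ell2_inner_def by simp

instantiation ell2 :: (type) real_inner
begin
definition zero_ell2_def: "0 = ell2_zero"
definition plus_ell2_def: "x + y = ell2_add x y"
definition uminus_ell2_def: "- x = ell2_scale (-1) x"
definition minus_ell2_def: "x - y = ell2_add x (ell2_scale (-1) y)"
definition scaleR_ell2_def: "scaleR r x = ell2_scale (complex_of_real r) x"
definition norm_ell2_def: "norm x = ell2_norm x"
definition sgn_ell2_def: "sgn x = scaleR (inverse (norm x)) (x::'a ell2)"
definition dist_ell2_def: "dist x y = norm (x - (y::'a ell2))"
definition uniformity_ell2_def: "(uniformity :: ('a ell2 \<times> 'a ell2) filter) = (INF e\<in>{0<..}. principal {(x, y). dist x y < (e::real)})"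
definition open_ell2_def: "open U = (\<forall>x\<in>U. \<forall>\<^sub>F (x', y) in uniformity. x' = x \<longrightarrow> y \<in> (U::'a ell2 set))"
definition inner_ell2_def: "inner x y = Re (ell2_inner x y)"

instance proof
  fix x y z :: "'a ell2" and a b :: real and U :: "'a ell2 set"
  show "x + y + z = x + (y + z)" unfolding plus_ell2_def by (rule ell2_eqI) simp
  show "x + y = y + x" unfolding plus_ell2_def by (rule ell2_eqI) simp
  show "0 + x = x" unfolding plus_ell2_def zero_ell2_def by (rule ell2_eqI) simp
  show "- x + x = 0" unfolding plus_ell2_def zero_ell2_def uminus_ell2_def by (rule ell2_eqI) simp
  show "x - y = x + - y" unfolding plus_ell2_def minus_ell2_def uminus_ell2_def by (rule ell2_eqI) simp
  show "a *\<^sub>R (x + y) = a *\<^sub>R x + a *\<^sub>R y" unfolding plus_ell2_def scaleR_ell2_def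
    by (rule ell2_eqI) (simp add: algebra_simps)
  show "(a + b) *\<^sub>R x = a *\<^sub>R x + b *\<^sub>R x" unfolding plus_ell2_def scaleR_ell2_def
    by (rule ell2_eqI) (simp add: algebra_simps)
  show "a *\<^sub>R b *\<^sub>R x = (a * b) *\<^sub>R x" unfolding scaleR_ell2_def by (rule ell2_eqI) simp
  show "1 *\<^sub>R x = x" unfolding scaleR_ell2_def by (rule ell2_eqI) simp
  show "sgn x = inverse (norm x) *\<^sub>R x" by (fact sgn_ell2_def)
  show "dist x y = norm (x - y)" by (fact dist_ell2_def)
  show "(uniformity :: ('a ell2 \<times> 'a ell2) filter) = (INF e\<in>{0<..}. principal {(x, y). dist x y < e})"
    by (fact uniformity_ell2_def)
  show "open U = (\<forall>x\<in>U. \<forall>\<^sub>F (x', y) in uniformity. x' = x \<longrightarrow> y \<in> U)"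
    by (fact open_ell2_def)
  show "inner x y = inner y x"
    unfolding inner_ell2_def by (subst inner_cnj_c) simp
  show "inner (x + y) z = inner x z + inner y z"
    unfolding inner_ell2_def plus_ell2_def by (simp add: inner_add_left_c0)
  show "inner (a *\<^sub>R x) y = a * inner x y"
    unfolding inner_ell2_def scaleR_ell2_def by (simp add: inner_scale_left_c)
  show "0 \<le> inner x x"
    unfolding inner_ell2_def by (rule inner_self_nonneg0)
  show "(inner x x = 0) = (x = 0)"
    unfolding inner_ell2_def zero_ell2_def using inner_self_zero0 by (auto simp: inner_zero0)
  show "norm x = sqrt (inner x x)"
    by (simp add: norm_ell2_def ell2_norm_def inner_ell2_def)
qed
end

lemma vzero[simp]: "ell2_vec 0 i = 0" by (simp add: zero_ell2_def)
lemma vplus[simp]: "ell2_vec (x + y) i = ell2_vec x i + ell2_vec y i" by (simp add: plus_ell2_def)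
lemma vuminus[simp]: "ell2_vec (- x) i = - ell2_vec x i" by (simp add: uminus_ell2_def)
lemma vminus[simp]: "ell2_vec (x - y) i = ell2_vec x i - ell2_vec y i" by (simp add: minus_ell2_def)
lemma vscaleR[simp]: "ell2_vec (scaleR r x) i = complex_of_real r * ell2_vec x i" by (simp add: scaleR_ell2_def)



lemma norm_sq_infsum: "(norm x)^2 = (\<Sum>\<^sub>\<infinity>i. (cmod (ell2_vec x i))^2)"
proof -
  have "(norm x)^2 = Re (ell2_inner x x)"
    using inner_self_nonneg0[of x] by (simp add: norm_ell2_def ell2_norm_def)
  also have "\<dots> = (\<Sum>\<^sub>\<infinity>i. (cmod (ell2_vec x i))^2)" by (simp add: inner_self_c)
  finally show ?thesis .
qed

lemma finite_sum_le_norm: "finite F \<Longrightarrow> (\<Sum>i\<in>F. (cmod (ell2_vec x i))^2) \<le> (norm x)^2"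
  unfolding norm_sq_infsum
  apply (subst infsum_finite[symmetric], assumption)
  apply (rule infsum_mono_neutral)
  using l2_vec[of x] unfolding l2_def by auto

lemma coord_le_norm: "cmod (ell2_vec x i) \<le> norm x"
proof -
  have "(cmod (ell2_vec x i))^2 \<le> (norm x)^2" using finite_sum_le_norm[of "{i}" x] by simp
  thus ?thesis using power2_le_imp_le by fastforce
qed

lemma ell2_complete: "Cauchy (X :: nat \<Rightarrow> 'i ell2) \<Longrightarrow> convergent X"
proof -
  assume C: "Cauchy X"
  have "Cauchy (\<lambda>n. ell2_vec (X n) i)" for i
  proof (rule CauchyI)
    fix e :: real assume "0 < e"
    then obtain M where "\<forall>m\<ge>M. \<forall>n\<ge>M. norm (X m - X n) < e" using CauchyD[OF C] by blast
    thus "\<exists>M. \<forall>m\<ge>M. \<forall>n\<ge>M. norm (ell2_vec (X m) i - ell2_vec (X n) i) < e"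
      using coord_le_norm[of "X _ - X _" i] by (metis le_less_trans vminus)
  qed
  then have "convergent (\<lambda>n. ell2_vec (X n) i)" for i by (simp add: Cauchy_convergent_iff)
  then obtain f where f: "\<And>i. (\<lambda>n. ell2_vec (X n) i) \<longlonglongrightarrow> f i"
    unfolding convergent_def by metis
  have key: "\<exists>N. \<forall>n\<ge>N. \<forall>F. finite F \<longrightarrow> (\<Sum>i\<in>F. (cmod (ell2_vec (X n) i - f i))^2) \<le> e^2"
    if e: "e > 0" for e
  proof -
    obtain N where N: "\<forall>m\<ge>N. \<forall>n\<ge>N. norm (X m - X n) < e" using CauchyD[OF C e] by blast
    show ?thesis
    proof (intro exI allI impI)
      fix n and F :: "'i set" assume n: "n \<ge> N" and F: "finite F"
      have lim: "(\<lambda>m. (\<Sum>i\<in>F. (cmod (ell2_vec (X n) i - ell2_vec (X m) i))^2)) \<longlonglongrightarrow>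
                 (\<Sum>i\<in>F. (cmod (ell2_vec (X n) i - f i))^2)"
        by (intro tendsto_intros f)
      show "(\<Sum>i\<in>F. (cmod (ell2_vec (X n) i - f i))^2) \<le> e^2"
      proof (rule LIMSEQ_le_const2[OF lim], intro exI allI impI)
        fix m assume m: "m \<ge> N"
        have "(\<Sum>i\<in>F. (cmod (ell2_vec (X n) i - ell2_vec (X m) i))^2) \<le> (norm (X n - X m))^2"
          using finite_sum_le_norm[OF F, of "X n - X m"] by simp
        also have "\<dots> \<le> e^2" using N n m by (intro power_mono) (auto simp: less_imp_le)
        finally show "(\<Sum>i\<in>F. (cmod (ell2_vec (X n) i - ell2_vec (X m) i))^2) \<le> e^2" .
      qed
    qed
  qed
  have l2diff: "l2 (\<lambda>i. ell2_vec (X n) i - f i)" and diffle: "(\<Sum>\<^sub>\<infinity>i. (cmod (ell2_vec (X n) i - f i))^2) \<le> e^2"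
    if "e > 0" "\<forall>n\<ge>N. \<forall>F. finite F \<longrightarrow> (\<Sum>i\<in>F. (cmod (ell2_vec (X n) i - f i))^2) \<le> e^2" "n \<ge> N" for n N e
  proof -
    have s: "(\<lambda>i. (cmod (ell2_vec (X n) i - f i))^2) summable_on UNIV"
      apply (rule nonneg_bdd_above_summable_on)
       apply simp
      apply (rule bdd_aboveI[where M="e^2"])
      using that by auto
    thus "l2 (\<lambda>i. ell2_vec (X n) i - f i)" unfolding l2_def .
    show "(\<Sum>\<^sub>\<infinity>i. (cmod (ell2_vec (X n) i - f i))^2) \<le> e^2"
      using s that by (intro infsum_le_finite_sums) auto
  qed
  obtain N1 where N1: "\<forall>n\<ge>N1. \<forall>F. finite F \<longrightarrow> (\<Sum>i\<in>F. (cmod (ell2_vec (X n) i - f i))^2) \<le> 1^2"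
    using key[of 1] by auto
  have "l2 (\<lambda>i. ell2_vec (X N1) i - f i)" using l2diff[of 1 N1 N1] N1 by auto
  hence "l2 (\<lambda>i. ell2_vec (X N1) i + (-1) * (ell2_vec (X N1) i - f i))"
    by (intro l2_add l2_scale) auto
  hence lf: "l2 f" by simp
  define L where "L = Ell2 f"
  have vL: "ell2_vec L = f" unfolding L_def using lf by simp
  have "X \<longlonglongrightarrow> L"
  proof (rule LIMSEQ_I)
    fix r :: real assume r: "0 < r"
    obtain N where N: "\<forall>n\<ge>N. \<forall>F. finite F \<longrightarrow> (\<Sum>i\<in>F. (cmod (ell2_vec (X n) i - f i))^2) \<le> (r/2)^2"
      using key[of "r/2"] r by auto
    show "\<exists>no. \<forall>n\<ge>no. norm (X n - L) < r"
    proof (intro exI allI impI)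
      fix n assume n: "n \<ge> N"
      have "(norm (X n - L))^2 = (\<Sum>\<^sub>\<infinity>i. (cmod (ell2_vec (X n) i - f i))^2)"
        unfolding norm_sq_infsum vminus vL ..
      also have "\<dots> \<le> (r/2)^2"
        by (rule diffle[of "r/2" N n]) (use N n r in auto)
      finally have "(norm (X n - L))^2 \<le> (r/2)^2" .
      hence "norm (X n - L) \<le> r/2" using r by (auto intro: power2_le_imp_le)
      thus "norm (X n - L) < r" using r by simp
    qed
  qed
  thus "convergent X" unfolding convergent_def by blast
qed

instance ell2 :: (type) complete_space
  by standard (rule ell2_complete)



abbreviation ci :: "'i ell2 \<Rightarrow> 'i ell2 \<Rightarrow> complex" where "ci \<equiv> ell2_inner"
abbreviation cs :: "complex \<Rightarrow> 'i ell2 \<Rightarrow> 'i ell2" where "cs \<equiv> ell2_scale"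

lemma ci_add_left: "ci (x + y) z = ci x z + ci y z"
  by (simp add: plus_ell2_def inner_add_left_c0)
lemma ci_add_right: "ci x (y + z) = ci x y + ci x z"
  by (simp add: plus_ell2_def inner_add_right_c0)
lemma ci_scale_left: "ci (cs c x) y = cnj c * ci x y" by (rule inner_scale_left_c)
lemma ci_scale_right: "ci x (cs c y) = c * ci x y" by (rule inner_scale_right_c)
lemma ci_scaleR_left: "ci (r *\<^sub>R x) y = of_real r * ci x y"
  by (simp add: scaleR_ell2_def ci_scale_left)
lemma ci_scaleR_right: "ci x (r *\<^sub>R y) = of_real r * ci x y"
  by (simp add: scaleR_ell2_def ci_scale_right)
lemma ci_minus_left: "ci (- x) y = - ci x y"
  by (simp add: uminus_ell2_def ci_scale_left)
lemma ci_minus_right: "ci x (- y) = - ci x y"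
  by (simp add: uminus_ell2_def ci_scale_right)
lemma ci_diff_left: "ci (x - y) z = ci x z - ci y z"
  unfolding diff_conv_add_uminus ci_add_left ci_minus_left by simp
lemma ci_diff_right: "ci x (y - z) = ci x y - ci x z"
  unfolding diff_conv_add_uminus ci_add_right ci_minus_right by simp
lemma ci_zero_left[simp]: "ci 0 y = 0"
  using ci_scaleR_left[of 0 0 y] by simp
lemma ci_zero_right[simp]: "ci x 0 = 0"
  using ci_scaleR_right[of x 0 0] by simp
lemma ci_cnj: "ci y x = cnj (ci x y)" by (rule inner_cnj_c)
lemma ci_self: "ci x x = of_real ((norm x)^2)"
proof -
  have "ci x x = of_real (\<Sum>\<^sub>\<infinity>i. (cmod (ell2_vec x i))^2)" by (rule inner_self_c)
  thus ?thesis by (simp add: norm_sq_infsum)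
qed
lemma Re_ci_eq_inner: "Re (ci x y) = inner x y" by (simp add: inner_ell2_def)

lemma cs_vec[simp]: "ell2_vec (cs c x) i = c * ell2_vec x i" by simp

lemma cs_add: "cs c (x + y) = cs c x + cs c y" by (rule ell2_eqI) (simp add: algebra_simps)
lemma cs_diff: "cs c (x - y) = cs c x - cs c y" by (rule ell2_eqI) (simp add: algebra_simps)
lemma cs_cs: "cs c (cs d x) = cs (c * d) x" by (rule ell2_eqI) (simp add: algebra_simps)
lemma cs_one[simp]: "cs 1 x = x" by (rule ell2_eqI) simp
lemma cs_zero[simp]: "cs 0 x = 0" by (rule ell2_eqI) simp
lemma cs_zero_right[simp]: "cs c 0 = 0" by (rule ell2_eqI) simp
lemma cs_minus_one: "cs (-1) x = - x" by (rule ell2_eqI) simp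
lemma cs_of_real: "cs (of_real r) x = r *\<^sub>R x" by (rule ell2_eqI) simp
lemma cs_add_left: "cs (c + d) x = cs c x + cs d x" by (rule ell2_eqI) (simp add: algebra_simps)

lemma norm_cs: "norm (cs c x) = cmod c * norm x"
proof -
  have "(norm (cs c x))^2 = (\<Sum>\<^sub>\<infinity>i. (cmod c)^2 * (cmod (ell2_vec x i))^2)"
    unfolding norm_sq_infsum by (simp add: norm_mult power_mult_distrib)
  also have "\<dots> = (cmod c)^2 * (norm x)^2" unfolding norm_sq_infsum by (rule infsum_cmult_right')
  finally have "(norm (cs c x))^2 = (cmod c * norm x)^2" by (simp add: power_mult_distrib)
  thus ?thesis by (simp add: power2_eq_iff_nonneg)
qed

lemma ci_cauchy_schwarz: "cmod (ci x y) \<le> norm x * norm y"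
proof (cases "ci x y = 0")
  case True thus ?thesis by simp
next
  case False
  define c where "c = ci x y"
  define w where "w = c / of_real (cmod c)"
  have cw: "cmod w = 1" using False by (simp add: w_def c_def norm_divide)
  have "ci (cs w x) y = cnj w * c" by (simp add: ci_scale_left c_def)
  also have "\<dots> = of_real (cmod c)"
    using False by (simp add: w_def c_def complex_norm_square[symmetric] field_simps power2_eq_square)
  finally have e: "ci (cs w x) y = of_real (cmod c)" .
  have "cmod c = inner (cs w x) y" using e Re_ci_eq_inner[of "cs w x" y] by simp
  also have "\<dots> \<le> norm (cs w x) * norm y" by (rule norm_cauchy_schwarz)
  also have "\<dots> = norm x * norm y" by (simp add: norm_cs cw)
  finally show ?thesis by (simp add: c_def)
qed

lemma bop_add: "bounded_op X \<Longrightarrow> X (x + y) = X x + X y"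
  by (simp add: bounded_op_def plus_ell2_def)
lemma bop_cs: "bounded_op X \<Longrightarrow> X (cs c x) = cs c (X x)"
  by (simp add: bounded_op_def)
lemma bop_scaleR: "bounded_op X \<Longrightarrow> X (r *\<^sub>R x) = r *\<^sub>R X x"
  using bop_cs[of X "of_real r" x] by (simp add: cs_of_real)
lemma bop_minus: "bounded_op X \<Longrightarrow> X (- x) = - X x"
  using bop_cs[of X "-1" x] by (simp add: cs_minus_one)
lemma bop_diff: "bounded_op X \<Longrightarrow> X (x - y) = X x - X y"
  unfolding diff_conv_add_uminus by (simp only: bop_add bop_minus)
lemma bop_zero: "bounded_op X \<Longrightarrow> X 0 = 0"
  using bop_scaleR[of X 0 0] by simp
lemma bop_bound: "bounded_op X \<Longrightarrow> \<exists>K>0. \<forall>x. norm (X x) \<le> K * norm x"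
proof -
  assume "bounded_op X"
  then obtain K where K: "\<forall>x. ell2_norm (X x) \<le> K * ell2_norm x" by (auto simp: bounded_op_def)
  show ?thesis
  proof (intro exI conjI allI)
    show "0 < max K 1" by simp
    fix x
    have "norm (X x) \<le> K * norm x" using K by (simp add: norm_ell2_def)
    also have "\<dots> \<le> max K 1 * norm x" by (intro mult_right_mono) auto
    finally show "norm (X x) \<le> max K 1 * norm x" .
  qed
qed
lemma bop_bounded_linear: "bounded_op X \<Longrightarrow> bounded_linear X"
proof -
  assume b: "bounded_op X"
  then obtain K where "\<forall>x. norm (X x) \<le> K * norm x" using bop_bound by blast
  then show ?thesis
    by (intro bounded_linear_intro[of _ K]) (auto simp: bop_add[OF b] bop_scaleR[OF b] mult.commute)
qed
lemma bop_tendsto: "bounded_op X \<Longrightarrow> (f \<longlongrightarrow> l) F \<Longrightarrow> ((\<lambda>n. X (f n)) \<longlongrightarrow> X l) F"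
  using bounded_linear.tendsto[OF bop_bounded_linear] by blast

lemma bop_sum: "bounded_op X \<Longrightarrow> X (sum f S) = (\<Sum>i\<in>S. X (f i))"
  by (induction S rule: infinite_finite_induct) (auto simp: bop_zero bop_add)

lemma BH_iff: "X \<in> BH \<longleftrightarrow> bounded_op X" by (simp add: BH_def)

lemma bop_intro:
  assumes "\<And>x y. X (x + y) = X x + X y" "\<And>c x. X (cs c x) = cs c (X x)"
    "\<And>x. norm (X x) \<le> K * norm x"
  shows "bounded_op X"
  using assms unfolding bounded_op_def plus_ell2_def norm_ell2_def by blast

lemma op_add_apply[simp]: "op_add X Y x = X x + Y x" by (simp add: op_add_def plus_ell2_def)
lemma op_scale_apply[simp]: "op_scale c X x = cs c (X x)" by (simp add: op_scale_def)
lemma op_minus_apply[simp]: "op_minus X Y x = X x - Y x"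
  by (simp add: op_minus_def op_add_def op_scale_def minus_ell2_def)

lemma op_pos_iff: "op_pos X \<longleftrightarrow> (\<forall>x. Im (ci x (X x)) = 0 \<and> 0 \<le> Re (ci x (X x)))"
  by (simp add: op_pos_def cnonneg_def)
lemma op_le_iff: "op_le X Y \<longleftrightarrow> (\<forall>x. Im (ci x (X x)) = Im (ci x (Y x)) \<and> Re (ci x (X x)) \<le> Re (ci x (Y x)))"
  by (auto simp: op_le_def op_pos_iff ci_diff_right)

section \<open>Hermitian operators\<close>

definition herm :: "'i op \<Rightarrow> bool" where
  "herm X \<longleftrightarrow> (\<forall>x y. ci x (X y) = ci (X x) y)"

lemma form_real_herm:
  assumes b: "bounded_op X" and r: "\<And>x. Im (ci x (X x)) = 0"
  shows "herm X"
  unfolding herm_def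
proof (intro allI)
  fix x y
  define B where "B u v = ci u (X v)" for u v
  have r': "Im (B u u) = 0" for u using r by (simp add: B_def)
  have e1: "B (x + y) (x + y) = B x x + B x y + B y x + B y y"
    by (simp add: B_def bop_add[OF b] ci_add_left ci_add_right)
  have e2: "B (x + cs \<i> y) (x + cs \<i> y) = B x x + \<i> * B x y - \<i> * B y x + B y y"
    by (simp add: B_def bop_add[OF b] bop_cs[OF b] ci_add_left ci_add_right ci_scale_left ci_scale_right
         cs_cs algebra_simps)
  have i1: "Im (B x y) + Im (B y x) = 0" using e1 r'[of "x+y"] r'[of x] r'[of y] by simp
  have i2: "Re (B x y) - Re (B y x) = 0" using e2 r'[of "x + cs \<i> y"] r'[of x] r'[of y] by simp
  have "B x y = cnj (B y x)" using i1 i2 by (simp add: complex_eq_iff)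
  thus "ci x (X y) = ci (X x) y" by (simp add: B_def ci_cnj[of "X x" y])
qed

lemma pos_herm: "bounded_op X \<Longrightarrow> op_pos X \<Longrightarrow> herm X"
  by (rule form_real_herm) (auto simp: op_pos_iff)

lemma pos_zero_kill:
  assumes b: "bounded_op X" and p: "op_pos X" and z: "ci x (X x) = 0"
  shows "X x = 0"
proof (rule ccontr)
  assume ne: "X x \<noteq> 0"
  define u where "u = X x"
  have h: "herm X" using pos_herm[OF b p] .
  define M where "M = Re (ci u (X u))"
  have M0: "M \<ge> 0" using p by (simp add: op_pos_iff M_def)
  define n where "n = (norm u)^2"
  have n0: "n > 0" using ne by (simp add: n_def u_def)
  define s where "s = n / (M + 1)"
  have s0: "s > 0" using n0 M0 by (simp add: s_def)
  have "0 \<le> Re (ci (x - s *\<^sub>R u) (X (x - s *\<^sub>R u)))" using p by (simp add: op_pos_iff)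
  also have "ci (x - s *\<^sub>R u) (X (x - s *\<^sub>R u)) =
      ci x (X x) - of_real s * ci x (X u) - of_real s * ci u (X x) + of_real s * of_real s * ci u (X u)"
    by (simp add: bop_diff[OF b] bop_scaleR[OF b] ci_diff_left ci_diff_right ci_scaleR_left ci_scaleR_right
       algebra_simps)
  also have "ci x (X u) = ci u u" using h by (simp add: herm_def u_def)
  also have "ci u (X x) = ci u u" by (simp add: u_def)
  finally have ineq: "0 \<le> Re (ci x (X x) - of_real s * ci u u - of_real s * ci u u + of_real s * of_real s * ci u (X u))" .
  have cuu: "ci u u = of_real n" by (simp add: ci_self n_def)
  have "Re (ci x (X x) - of_real s * ci u u - of_real s * ci u u + of_real s * of_real s * ci u (X u))
        = - 2 * s * n + s * s * M"
    unfolding z cuu M_def by simp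
  hence "0 \<le> - 2 * s * n + s * s * M" using ineq by simp
  hence "0 \<le> s * (s * M - 2 * n)" by (simp add: algebra_simps)
  hence "0 \<le> s * M - 2 * n" using s0 by (simp add: zero_le_mult_iff)
  hence "2 * n \<le> s * M" by simp
  also have "s * M \<le> n" using n0 M0
    by (simp add: s_def field_simps)
  finally show False using n0 by simp
qed



lemma vsum: "ell2_vec (sum f S) j = (\<Sum>i\<in>S. ell2_vec (f i) j)"
  by (induction S rule: infinite_finite_induct) auto

lemma l2_le: "l2 f \<Longrightarrow> (\<And>i. cmod (g i) \<le> cmod (f i)) \<Longrightarrow> l2 g"
  unfolding l2_def by (rule summable_on_comparison_test) (auto intro: power_mono)

definition delta :: "'i \<Rightarrow> 'i ell2" where "delta i = Ell2 (\<lambda>j. if j = i then 1 else 0)"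
definition tr :: "'i set \<Rightarrow> 'i ell2 \<Rightarrow> 'i ell2" where
  "tr F x = Ell2 (\<lambda>j. if j \<in> F then ell2_vec x j else 0)"

lemma l2_delta: "l2 (\<lambda>j. if j = i then 1 else (0::complex))"
proof -
  have h: "((\<lambda>_. 1::real) has_sum 1) {i}" by (rule has_sum_finiteI) auto
  have "(((\<lambda>j. (cmod (if j = i then 1 else (0::complex)))^2) has_sum 1) UNIV) \<longleftrightarrow> (((\<lambda>_. 1::real) has_sum 1) {i})"
    by (rule has_sum_cong_neutral) auto
  with h have "((\<lambda>j. (cmod (if j = i then 1 else (0::complex)))^2) has_sum 1) UNIV" by simp
  thus ?thesis unfolding l2_def summable_on_def by blast
qed

lemma vec_delta[simp]: "ell2_vec (delta i) j = (if j = i then 1 else 0)"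
  unfolding delta_def using Ell2_inv[OF l2_delta[of i]] by simp

lemma vec_tr[simp]: "ell2_vec (tr F x) j = (if j \<in> F then ell2_vec x j else 0)"
proof -
  have "l2 (\<lambda>j. if j \<in> F then ell2_vec x j else 0)" by (rule l2_le[OF l2_vec[of x]]) auto
  thus ?thesis unfolding tr_def by simp
qed

lemma tr_sum: "finite F \<Longrightarrow> tr F x = (\<Sum>i\<in>F. cs (ell2_vec x i) (delta i))"
  by (rule ell2_eqI) (auto simp: vsum if_distrib cong: if_cong)

lemma tr_tendsto: "((\<lambda>F. tr F x) \<longlongrightarrow> x) (finite_subsets_at_top UNIV)"
proof (rule tendstoI)
  fix e :: real assume e: "e > 0"
  define g where "g j = (cmod (ell2_vec x j))^2" for j
  define T where "T = infsum g UNIV"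
  have gs: "(g has_sum T) UNIV" using l2_vec[of x] unfolding l2_def g_def T_def by simp
  have g0: "g j \<ge> 0" for j by (simp add: g_def)
  obtain F0 where F0: "finite F0" "dist (sum g F0) T \<le> e^2/2"
    using has_sum_finite_approximation[OF gs, of "e^2/2"] e by auto
  have tail: "(norm (x - tr F x))^2 = T - sum g F" if "finite F" for F
  proof -
    have "((\<lambda>j. if j \<in> F then g j else 0) has_sum sum g F) UNIV \<longleftrightarrow> (g has_sum sum g F) F"
      by (rule has_sum_cong_neutral) auto
    hence h1: "((\<lambda>j. if j \<in> F then g j else 0) has_sum sum g F) UNIV" using that by simp
    have h2: "((\<lambda>j. - (if j \<in> F then g j else 0)) has_sum (- sum g F)) UNIV"
      using has_sum_uminusI[OF h1] .
    have "((\<lambda>j. g j + - (if j \<in> F then g j else 0)) has_sum (T + - sum g F)) UNIV"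
      by (rule has_sum_add[OF gs h2])
    hence "((\<lambda>j. (cmod (ell2_vec (x - tr F x) j))^2) has_sum (T + - sum g F)) UNIV"
      by (rule has_sum_cong[THEN iffD1, rotated]) (auto simp: g_def)
    thus ?thesis unfolding norm_sq_infsum using infsumI by fastforce
  qed
  have "eventually (\<lambda>F. dist (tr F x) x < e) (finite_subsets_at_top UNIV)"
    unfolding eventually_finite_subsets_at_top
  proof (intro exI conjI allI impI)
    show "finite F0" "F0 \<subseteq> UNIV" using F0 by auto
    fix F assume F: "finite F \<and> F0 \<subseteq> F \<and> F \<subseteq> UNIV"
    have "sum g F0 \<le> sum g F" using F g0 by (intro sum_mono2) auto
    moreover have "sum g F \<le> T" using has_sum_mono_neutral[of "\<lambda>j. if j \<in> F then g j else 0"] 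
      gs F g0 tail[of F] by (metis diff_ge_0_iff_ge zero_le_power2)
    ultimately have "T - sum g F \<le> e^2/2" using F0(2) by (simp add: dist_real_def)
    hence "(norm (x - tr F x))^2 \<le> e^2/2" using tail F by simp
    also have "\<dots> < e^2" using e by simp
    finally have "norm (x - tr F x) < e" using e by (auto intro: power_less_imp_less_base)
    thus "dist (tr F x) x < e" by (simp add: dist_norm norm_minus_commute)
  qed
  thus "eventually (\<lambda>F. dist (tr F x) x < e) (finite_subsets_at_top UNIV)" .
qed

lemma ci_sum_left: "ci (sum f S) y = (\<Sum>i\<in>S. ci (f i) y)"
  by (induction S rule: infinite_finite_induct) (auto simp: ci_add_left)

lemma bl_ci_left: "bounded_linear (\<lambda>a. ci a y)"
  by (rule bounded_linear_intro[of _ "norm y"])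
     (auto simp: ci_add_left ci_scaleR_left scaleR_conv_of_real ci_cauchy_schwarz)

lemma ci_tendsto_left: "(f \<longlongrightarrow> l) F \<Longrightarrow> ((\<lambda>n. ci (f n) y) \<longlongrightarrow> ci l y) F"
  using bounded_linear.tendsto[OF bl_ci_left] by blast

lemma bl_ci_right: "bounded_linear (\<lambda>a. ci y a)"
  by (rule bounded_linear_intro[of _ "norm y"])
     (auto simp: ci_add_right ci_scaleR_right scaleR_conv_of_real, metis ci_cauchy_schwarz mult.commute)

lemma ci_tendsto_right: "(f \<longlongrightarrow> l) F \<Longrightarrow> ((\<lambda>n. ci y (f n)) \<longlongrightarrow> ci y l) F"
  using bounded_linear.tendsto[OF bl_ci_right] by blast

section \<open>Existence of adjoints\<close>

lemma adjoint_exists: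
  assumes b: "bounded_op X"
  shows "\<exists>Y. Y \<in> BH \<and> (\<forall>x y. ci (X x) y = ci x (Y y))"
proof -
  obtain K where K0: "K > 0" and K: "\<And>x. norm (X x) \<le> K * norm x" using bop_bound[OF b] by blast
  define c where "c y i = ci (X (delta i)) y" for y i
  have fin: "(\<Sum>i\<in>F. (cmod (c y i))^2) \<le> (K * norm y)^2" if F: "finite F" for F y
  proof -
    define S where "S = (\<Sum>i\<in>F. (cmod (c y i))^2)"
    define z where "z = (\<Sum>i\<in>F. cs (c y i) (delta i))"
    have vz: "ell2_vec z j = (if j \<in> F then c y j else 0)" for j
      unfolding z_def vsum by (auto simp: if_distrib F cong: if_cong)
    have nz: "(norm z)^2 = S"
    proof -
      have "((\<lambda>j. (cmod (ell2_vec z j))^2) has_sum S) UNIV"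
        unfolding S_def vz
        using has_sum_cong_neutral[where S=UNIV and T=F and g="\<lambda>i. (cmod (c y i))^2" and f="\<lambda>j. (cmod (if j \<in> F then c y j else 0))^2"] F
        by (auto simp: has_sum_finite)
      thus ?thesis unfolding norm_sq_infsum by (rule infsumI)
    qed
    have "ci (X z) y = (\<Sum>i\<in>F. cnj (c y i) * c y i)"
      unfolding z_def bop_sum[OF b] ci_sum_left by (simp add: bop_cs[OF b] ci_scale_left c_def)
    also have "\<dots> = of_real S" unfolding S_def of_real_sum
      by (intro sum.cong refl) (metis complex_norm_square mult.commute)
    finally have e: "ci (X z) y = of_real S" .
    have S0: "S \<ge> 0" unfolding S_def by (simp add: sum_nonneg)
    have "S = cmod (ci (X z) y)" unfolding e using S0 by simp
    also have "\<dots> \<le> norm (X z) * norm y" by (rule ci_cauchy_schwarz)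
    also have "\<dots> \<le> K * norm z * norm y" using K[of z] by (simp add: mult_right_mono)
    finally have le1: "S \<le> K * norm z * norm y" .
    have le2: "norm z * norm z \<le> norm z * (K * norm y)" using le1 nz
      by (simp add: power2_eq_square mult.assoc mult.left_commute)
    have "norm z \<le> K * norm y"
    proof (cases "norm z = 0")
      case True thus ?thesis using K0 by simp
    next
      case False hence "norm z > 0" by simp
      thus ?thesis using le2 mult_le_cancel_left_pos by blast
    qed
    hence "(norm z)^2 \<le> (K * norm y)^2" by (intro power_mono) auto
    thus ?thesis using nz S_def by simp
  qed
  have l2c: "l2 (c y)" for y
    unfolding l2_def
    by (rule nonneg_bdd_above_summable_on) (auto intro!: bdd_aboveI[where M="(K * norm y)^2"] fin)
  define Y where "Y y = Ell2 (c y)" for y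
  have vY: "ell2_vec (Y y) = c y" for y using l2c by (simp add: Y_def)
  have cadd: "c (y + y') i = c y i + c y' i" for y y' i by (simp add: c_def ci_add_right)
  have ccs: "c (cs d y) i = d * c y i" for d y i by (simp add: c_def ci_scale_right)
  have Ynorm: "norm (Y y) \<le> K * norm y" for y
  proof -
    have "(norm (Y y))^2 \<le> (K * norm y)^2"
      unfolding norm_sq_infsum vY using l2c[of y] fin[of _ y] unfolding l2_def
      by (intro infsum_le_finite_sums) auto
    thus ?thesis using K0 by (auto intro: power2_le_imp_le)
  qed
  have YBH: "Y \<in> BH" unfolding BH_iff
    by (rule bop_intro[where K=K]) (auto intro!: ell2_eqI simp: vY cadd ccs Ynorm)
  have adj: "ci (X x) y = ci x (Y y)" for x y
  proof -
    have l1: "((\<lambda>F. ci (X (tr F x)) y) \<longlongrightarrow> ci (X x) y) (finite_subsets_at_top UNIV)"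
      by (intro ci_tendsto_left bop_tendsto[OF b] tr_tendsto)
    have "((\<lambda>i. cnj (ell2_vec x i) * c y i) has_sum ci x (Y y)) UNIV"
      unfolding ell2_inner_def vY using l2_prod[OF l2_vec l2c] by simp
    hence l2': "((\<lambda>F. \<Sum>i\<in>F. cnj (ell2_vec x i) * c y i) \<longlongrightarrow> ci x (Y y)) (finite_subsets_at_top UNIV)"
      by (simp add: has_sum_def)
    have eq: "ci (X (tr F x)) y = (\<Sum>i\<in>F. cnj (ell2_vec x i) * c y i)" if "finite F" for F
      unfolding tr_sum[OF that] bop_sum[OF b] ci_sum_left by (simp add: bop_cs[OF b] ci_scale_left c_def)
    have l2'': "((\<lambda>F. ci (X (tr F x)) y) \<longlongrightarrow> ci x (Y y)) (finite_subsets_at_top UNIV)"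
      using l2' by (rule Lim_transform_eventually) (auto simp: eq intro!: eventually_finite_subsets_at_top_weakI)
    show ?thesis using l1 l2'' by (rule tendsto_unique[OF finite_subsets_at_top_neq_bot])
  qed
  show ?thesis using YBH adj by blast
qed

lemma adj_prop: assumes "bounded_op X" shows "adj X \<in> BH \<and> (\<forall>x y. ci (X x) y = ci x (adj X y))"
  unfolding adj_def by (rule someI_ex[OF adjoint_exists[OF assms]])

lemma adj_unique:
  assumes "Y \<in> BH" "\<And>x y. ci (X x) y = ci x (Y y)" "bounded_op X"
  shows "adj X = Y"
proof (rule ext)
  fix y
  have "ci x (adj X y - Y y) = 0" for x
    using adj_prop[OF assms(3)] assms(2) by (simp add: ci_diff_right)
  from this[of "adj X y - Y y"] show "adj X y = Y y" by (simp add: ci_self)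
qed

lemma adj_self_herm: "bounded_op P \<Longrightarrow> adj P = P \<Longrightarrow> herm P"
  using adj_prop[of P] by (auto simp: herm_def)

lemma herm_adj: "bounded_op P \<Longrightarrow> herm P \<Longrightarrow> adj P = P"
  by (rule adj_unique) (auto simp: herm_def BH_iff)



lemma convex_seq_decr:
  fixes f :: "nat \<Rightarrow> real"
  assumes bd: "\<And>n. f n \<le> B" and cv: "\<And>n. f n - 2 * f (Suc n) + f (Suc (Suc n)) \<ge> 0"
  shows "f (Suc n) \<le> f n"
proof (rule ccontr)
  assume "\<not> f (Suc n) \<le> f n"
  define d where "d = f (Suc n) - f n"
  have d: "d > 0" using \<open>\<not> f (Suc n) \<le> f n\<close> by (simp add: d_def)
  have dd: "f (Suc (m + k)) - f (m + k) \<ge> f (Suc m) - f m" for m k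
  proof (induction k)
    case 0 thus ?case by simp
  next
    case (Suc k) thus ?case using cv[of "m + k"] by simp
  qed
  have fk: "f (n + k) \<ge> f n + real k * d" for k
  proof (induction k)
    case 0 thus ?case by simp
  next
    case (Suc k)
    have "f (n + Suc k) \<ge> f (n + k) + d" unfolding d_def using dd[of n k] by simp
    thus ?case using Suc by (simp add: algebra_simps)
  qed
  obtain k :: nat where k: "real k > (B - f n) / d" using reals_Archimedean2 by blast
  have "real k * d > B - f n" using k d by (simp add: field_simps)
  thus False using fk[of k] bd[of "n + k"] by simp
qed

lemma real_discr:
  fixes A B C :: real
  assumes q: "\<And>t. 0 \<le> A - 2 * t * B + t^2 * C" and C: "C \<ge> 0"
  shows "B^2 \<le> A * C"
proof (cases "C = 0")
  case False
  hence Cp: "C > 0" using C by simp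
  have "0 \<le> A - 2 * (B / C) * B + (B / C)^2 * C" by (rule q)
  also have "\<dots> = A - B^2 / C" using Cp by (simp add: power2_eq_square field_simps)
  finally show ?thesis using Cp by (simp add: field_simps)
next
  case True
  have "B = 0"
  proof (rule ccontr)
    assume "B \<noteq> 0"
    have "0 \<le> A - 2 * ((A + 1) / (2 * B)) * B" using q[of "(A + 1) / (2 * B)"] True by simp
    also have "\<dots> = -1" using \<open>B \<noteq> 0\<close> by (simp add: field_simps)
    finally show False by simp
  qed
  thus ?thesis using True by simp
qed

lemma convex_seq_bernoulli:
  fixes f :: "nat \<Rightarrow> real"
  assumes cv: "\<And>n. f n - 2 * f (Suc n) + f (Suc (Suc n)) \<ge> 0"
  shows "f 0 - f n \<le> real n * (f 0 - f 1)"
proof -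
  have dd: "f k - f (Suc k) \<le> f 0 - f 1" for k
  proof (induction k)
    case 0 thus ?case by simp
  next
    case (Suc k) thus ?case using cv[of k] by simp
  qed
  show ?thesis
  proof (induction n)
    case 0 thus ?case by simp
  next
    case (Suc n)
    have "f 0 - f (Suc n) = (f 0 - f n) + (f n - f (Suc n))" by simp
    also have "\<dots> \<le> real n * (f 0 - f 1) + (f 0 - f 1)" using Suc dd[of n] by simp
    finally show ?case by (simp add: algebra_simps)
  qed
qed

lemma herm_real: "herm H \<Longrightarrow> Im (ci x (H x)) = 0"
proof -
  assume "herm H"
  hence "ci x (H x) = cnj (ci x (H x))" by (metis herm_def ci_cnj)
  hence "Im (ci x (H x)) = Im (cnj (ci x (H x)))" by simp
  thus ?thesis by simp
qed

lemma cs_tendsto: "(f \<longlongrightarrow> l) F \<Longrightarrow> ((\<lambda>n. cs c (f n)) \<longlongrightarrow> cs c l) F"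
proof -
  have "bounded_linear (cs c :: 'i ell2 \<Rightarrow> 'i ell2)"
    by (rule bounded_linear_intro[of _ "cmod c"]) (auto simp: cs_add cs_cs norm_cs scaleR_conv_of_real
        mult.commute cs_of_real[symmetric])
  thus "(f \<longlongrightarrow> l) F \<Longrightarrow> ((\<lambda>n. cs c (f n)) \<longlongrightarrow> cs c l) F" using bounded_linear.tendsto by blast
qed



section \<open>Cauchy-Schwarz for positive operators\<close>

lemma pos_cs:
  assumes b: "bounded_op H" and p: "op_pos H"
  shows "(cmod (ci u (H v)))^2 \<le> Re (ci u (H u)) * Re (ci v (H v))"
proof (cases "ci u (H v) = 0")
  case True thus ?thesis using p by (simp add: op_pos_iff)
next
  case False
  have h: "herm H" using pos_herm[OF b p] .
  define \<beta> where "\<beta> = ci u (H v)"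
  define w where "w = cnj \<beta> / of_real (cmod \<beta>)"
  have w1: "cmod w = 1" using False by (simp add: w_def \<beta>_def norm_divide)
  define v' where "v' = cs w v"
  have uv': "ci u (H v') = of_real (cmod \<beta>)"
    using False by (simp add: v'_def bop_cs[OF b] ci_scale_right w_def \<beta>_def[symmetric]
        complex_norm_square[symmetric] field_simps power2_eq_square)
  have v'u: "ci v' (H u) = of_real (cmod \<beta>)"
  proof -
    have "ci v' (H u) = ci (H v') u" using h by (simp add: herm_def)
    also have "\<dots> = cnj (ci u (H v'))" by (rule ci_cnj)
    finally show ?thesis using uv' by simp
  qed
  have v'v': "ci v' (H v') = ci v (H v)"
  proof -
    have "ci v' (H v') = cnj w * w * ci v (H v)"
      by (simp add: v'_def bop_cs[OF b] ci_scale_right ci_scale_left)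
    also have "cnj w * w = 1" using w1 by (metis complex_norm_square mult.commute of_real_1 power_one)
    finally show ?thesis by simp
  qed
  have q: "0 \<le> Re (ci u (H u)) - 2 * t * cmod \<beta> + t^2 * Re (ci v (H v))" for t
  proof -
    have "0 \<le> Re (ci (u - t *\<^sub>R v') (H (u - t *\<^sub>R v')))" using p by (simp add: op_pos_iff)
    also have "ci (u - t *\<^sub>R v') (H (u - t *\<^sub>R v')) =
        ci u (H u) - of_real t * ci u (H v') - of_real t * ci v' (H u) + of_real t * of_real t * ci v' (H v')"
      by (simp add: bop_diff[OF b] bop_scaleR[OF b] ci_diff_left ci_diff_right ci_scaleR_left ci_scaleR_right
         algebra_simps)
    also have "\<dots> = ci u (H u) - of_real (2 * t * cmod \<beta>) + of_real (t^2) * ci v (H v)"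
      unfolding uv' v'u v'v' by (simp add: power2_eq_square algebra_simps)
    finally show ?thesis by simp
  qed
  have "(cmod \<beta>)^2 \<le> Re (ci u (H u)) * Re (ci v (H v))"
    by (rule real_discr[OF q]) (use p in \<open>simp add: op_pos_iff\<close>)
  thus ?thesis by (simp add: \<beta>_def)
qed

lemma Re_ci_self: "Re (ci x x) = (norm x)^2"
  using ci_self[of x] by (metis Re_complex_of_real)

locale setting =
  fixes A :: "'i op set" and a p :: "'i op" and K :: real
  assumes vN: "von_neumann_algebra A" and aA: "a \<in> A" and apos: "op_pos a"
    and supp: "is_support A a p" and K0: "K > 0" and Kb: "\<And>x. norm (a x) \<le> K * norm x"
begin

lemma A_bop: "X \<in> A \<Longrightarrow> bounded_op X"
  using vN by (auto simp: von_neumann_algebra_def BH_iff)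
lemma A_id: "id \<in> A" using vN by (simp add: von_neumann_algebra_def)
lemma A_add: "X \<in> A \<Longrightarrow> Y \<in> A \<Longrightarrow> op_add X Y \<in> A" using vN by (simp add: von_neumann_algebra_def)
lemma A_comp: "X \<in> A \<Longrightarrow> Y \<in> A \<Longrightarrow> X \<circ> Y \<in> A" using vN by (simp add: von_neumann_algebra_def)
lemma A_scale: "X \<in> A \<Longrightarrow> op_scale c X \<in> A" using vN by (simp add: von_neumann_algebra_def)
lemma A_minus: "X \<in> A \<Longrightarrow> Y \<in> A \<Longrightarrow> op_minus X Y \<in> A"
  unfolding op_minus_def by (intro A_add A_scale)
lemma A_cc: "commutant (commutant A) = A" using vN by (simp add: von_neumann_algebra_def)

lemma ba: "bounded_op a" using A_bop aA .
lemma ha: "herm a" using pos_herm[OF ba apos] .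

lemma a_re_nonneg: "0 \<le> Re (ci x (a x))" using apos by (simp add: op_pos_iff)
lemma a_im: "Im (ci x (a x)) = 0" using apos by (simp add: op_pos_iff)

lemma a_le: "Re (ci x (a x)) \<le> K * (norm x)^2"
proof -
  have "Re (ci x (a x)) \<le> cmod (ci x (a x))" by (rule complex_Re_le_cmod)
  also have "\<dots> \<le> norm x * norm (a x)" by (rule ci_cauchy_schwarz)
  also have "\<dots> \<le> norm x * (K * norm x)" by (intro mult_left_mono Kb) auto
  finally show ?thesis by (simp add: power2_eq_square algebra_simps)
qed

lemma a_sq: "(norm (a x))^2 \<le> K * Re (ci x (a x))"
proof -
  have e1: "ci x (a (a x)) = of_real ((norm (a x))^2)"
    using ha by (simp add: herm_def ci_self)
  have "(cmod (ci x (a (a x))))^2 \<le> Re (ci x (a x)) * Re (ci (a x) (a (a x)))"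
    by (rule pos_cs[OF ba apos])
  moreover have "cmod (ci x (a (a x))) = (norm (a x))^2" unfolding e1 norm_of_real by simp
  ultimately have i1: "((norm (a x))^2)^2 \<le> Re (ci x (a x)) * Re (ci (a x) (a (a x)))" by simp
  have "Re (ci (a x) (a (a x))) \<le> cmod (ci (a x) (a (a x)))" by (rule complex_Re_le_cmod)
  also have "\<dots> \<le> norm (a x) * norm (a (a x))" by (rule ci_cauchy_schwarz)
  also have "\<dots> \<le> norm (a x) * (K * norm (a x))" by (intro mult_left_mono Kb) auto
  finally have i2: "Re (ci (a x) (a (a x))) \<le> K * (norm (a x))^2" by (simp add: power2_eq_square algebra_simps)
  have "((norm (a x))^2)^2 \<le> Re (ci x (a x)) * (K * (norm (a x))^2)"
    using i1 i2 a_re_nonneg[of x] by (meson mult_left_mono order_trans)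
  hence le: "(norm (a x))^2 * (norm (a x))^2 \<le> (norm (a x))^2 * (K * Re (ci x (a x)))"
    by (simp add: power2_eq_square algebra_simps)
  show ?thesis
  proof (cases "norm (a x) = 0")
    case True thus ?thesis using a_re_nonneg[of x] K0 by simp
  next
    case False
    hence "(norm (a x))^2 > 0" by simp
    thus ?thesis using le mult_le_cancel_left_pos by blast
  qed
qed

definition b :: "'i op" where "b = op_minus id (op_scale (of_real (1/K)) a)"

lemma b_apply: "b x = x - (1/K) *\<^sub>R a x" unfolding b_def op_minus_apply op_scale_apply cs_of_real by simp
lemma bA: "b \<in> A" unfolding b_def by (intro A_minus A_id A_scale aA)
lemma bb: "bounded_op b" using A_bop bA .
lemma hb: "herm b"
  unfolding herm_def b_apply
  using ha by (simp add: herm_def ci_diff_left ci_diff_right ci_scaleR_left ci_scaleR_right)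

lemma ci_b: "ci x (b x) = of_real ((norm x)^2) - of_real (1/K) * ci x (a x)"
  by (simp add: b_apply ci_diff_right ci_scaleR_right ci_self)

lemma b_pos: "op_pos b"
  unfolding op_pos_iff
proof
  fix x
  have "(1/K) * Re (ci x (a x)) \<le> (1/K) * (K * (norm x)^2)" using a_le K0 by (intro mult_left_mono) auto
  hence "(1/K) * Re (ci x (a x)) \<le> (norm x)^2" using K0 by simp
  thus "Im (ci x (b x)) = 0 \<and> 0 \<le> Re (ci x (b x))" unfolding ci_b using a_im[of x] by simp
qed

lemma b_norm: "norm (b x) \<le> norm x"
proof -
  define r where "r = 1/K"
  have r0: "r > 0" using K0 by (simp add: r_def)
  have "ci (b x) (b x) = ci x x - of_real r * ci x (a x) - of_real r * ci (a x) x + of_real r * of_real r * ci (a x) (a x)"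
    by (simp add: b_apply r_def ci_diff_left ci_diff_right ci_scaleR_left ci_scaleR_right algebra_simps)
  hence "Re (ci (b x) (b x)) = Re (ci x x) - r * Re (ci x (a x)) - r * Re (ci (a x) x) + r * r * Re (ci (a x) (a x))"
    by simp
  hence "(norm (b x))^2 = (norm x)^2 - r * Re (ci x (a x)) - r * Re (ci (a x) x) + r * r * (norm (a x))^2"
    by (simp only: Re_ci_self)
  also have "Re (ci (a x) x) = Re (ci x (a x))" by (subst ci_cnj) simp
  finally have e: "(norm (b x))^2 = (norm x)^2 - 2 * r * Re (ci x (a x)) + r * r * (norm (a x))^2" by simp
  have "r * r * (norm (a x))^2 \<le> r * r * (K * Re (ci x (a x)))" using a_sq r0 by (intro mult_left_mono) auto
  also have "\<dots> = r * Re (ci x (a x))" using K0 by (simp add: r_def)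
  finally have "(norm (b x))^2 \<le> (norm x)^2 - r * Re (ci x (a x))" using e by simp
  also have "\<dots> \<le> (norm x)^2" using a_re_nonneg[of x] r0 by simp
  finally show ?thesis by (auto intro: power2_le_imp_le)
qed

definition bp :: "nat \<Rightarrow> 'i op" where "bp n = b ^^ n"

lemma bp_0[simp]: "bp 0 x = x" by (simp add: bp_def)
lemma bp_Suc: "bp (Suc n) x = b (bp n x)" by (simp add: bp_def)
lemma bp_Suc': "bp (Suc n) x = bp n (b x)" unfolding bp_def funpow_Suc_right by simp
lemma bp_add: "bp (m + n) x = bp m (bp n x)" by (simp add: bp_def funpow_add)
lemma bpA: "bp n \<in> A"
proof (induction n)
  case 0 show ?case unfolding bp_def funpow.simps(1) by (rule A_id)
next
  case (Suc n)
  have "bp (Suc n) = b \<circ> bp n" unfolding bp_def funpow.simps ..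
  thus ?case using A_comp[OF bA Suc] by (simp only:)
qed
lemma bpb: "bounded_op (bp n)" using A_bop bpA .
lemma hbp: "herm (bp n)"
proof (induction n)
  case 0 thus ?case by (simp add: herm_def)
next
  case (Suc n)
  show ?case unfolding herm_def
  proof (intro allI)
    fix x y
    have "ci x (bp (Suc n) y) = ci (b x) (bp n y)" using hb by (simp add: bp_Suc herm_def)
    also have "\<dots> = ci (bp n (b x)) y" using Suc by (simp add: herm_def)
    finally show "ci x (bp (Suc n) y) = ci (bp (Suc n) x) y" by (simp add: bp_Suc')
  qed
qed
lemma bp_norm: "norm (bp n x) \<le> norm x"
  by (induction n) (auto simp: bp_Suc intro: order_trans[OF b_norm])

definition u :: "nat \<Rightarrow> 'i ell2 \<Rightarrow> real" where "u n x = Re (ci x (bp n x))"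

lemma bp_ci: "ci (bp n x) (bp m y) = ci x (bp (n + m) y)"
  using hbp[of n] by (simp add: herm_def bp_add)

lemma bp_pos: "op_pos (bp n)"
  unfolding op_pos_iff
proof
  fix x
  have "\<exists>m. n = m + m \<or> n = m + Suc m" by presburger
  then obtain m where "n = m + m \<or> n = m + Suc m" by blast
  thus "Im (ci x (bp n x)) = 0 \<and> 0 \<le> Re (ci x (bp n x))"
  proof
    assume n: "n = m + m"
    have "ci x (bp n x) = ci (bp m x) (bp m x)" unfolding n by (rule bp_ci[symmetric])
    thus ?thesis by (simp add: ci_self)
  next
    assume n: "n = m + Suc m"
    have "ci x (bp n x) = ci (bp m x) (bp (Suc m) x)" unfolding n by (rule bp_ci[symmetric])
    also have "\<dots> = ci (bp m x) (b (bp m x))" by (simp only: bp_Suc)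
    finally show ?thesis using b_pos by (simp add: op_pos_iff)
  qed
qed

lemma u_nonneg: "0 \<le> u n x" using bp_pos by (simp add: u_def op_pos_iff)
lemma bp_im: "Im (ci x (bp n x)) = 0" using bp_pos by (simp add: op_pos_iff)

lemma u_le: "u n x \<le> (norm x)^2"
proof -
  have "u n x \<le> cmod (ci x (bp n x))" unfolding u_def by (rule complex_Re_le_cmod)
  also have "\<dots> \<le> norm x * norm (bp n x)" by (rule ci_cauchy_schwarz)
  also have "\<dots> \<le> norm x * norm x" by (intro mult_left_mono bp_norm) auto
  finally show ?thesis by (simp add: power2_eq_square)
qed

lemma u_convex: "u n x - 2 * u (Suc n) x + u (Suc (Suc n)) x \<ge> 0"
proof -
  define w where "w = x - b x"
  have "ci w (bp n w) = ci x (bp n x) - ci x (bp (Suc n) x) - ci (b x) (bp n x) + ci (b x) (bp (Suc n) x)"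
    by (simp add: w_def bop_diff[OF bpb] ci_diff_left ci_diff_right bp_Suc' algebra_simps)
  also have "ci (b x) (bp n x) = ci x (bp (Suc n) x)" using hb by (simp add: herm_def bp_Suc)
  also have "ci (b x) (bp (Suc n) x) = ci x (bp (Suc (Suc n)) x)" using hb by (simp add: herm_def bp_Suc)
  finally have "u n w = u n x - 2 * u (Suc n) x + u (Suc (Suc n)) x" by (simp add: u_def)
  thus ?thesis using u_nonneg[of n w] by simp
qed

lemma u_decr: "u (Suc n) x \<le> u n x"
  by (rule convex_seq_decr[where B="(norm x)^2"]) (auto intro: u_le u_convex)

lemma u_mono: "m \<le> n \<Longrightarrow> u n x \<le> u m x"
  using decseq_SucI[of "\<lambda>n. u n x", OF u_decr] by (simp add: decseq_def)

lemma u_bern: "u 0 x - u n x \<le> real n * (u 0 x - u 1 x)"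
  by (rule convex_seq_bernoulli) (rule u_convex)

lemma u_0: "u 0 x = (norm x)^2" by (simp add: u_def ci_self)
lemma u_1: "u 1 x = (norm x)^2 - (1/K) * Re (ci x (a x))"
  using ci_b[of x] by (simp add: u_def bp_def)

lemma u_conv: "\<exists>L. (\<lambda>n. u n x) \<longlonglongrightarrow> L"
proof -
  have "decseq (\<lambda>n. u n x)" by (rule decseq_SucI) (rule u_decr)
  then obtain L where "(\<lambda>n. u n x) \<longlonglongrightarrow> L" "\<forall>i. L \<le> u i x"
    using decseq_convergent[of "\<lambda>n. u n x" 0] u_nonneg by blast
  thus ?thesis by blast
qed

lemma bp_cauchy: "Cauchy (\<lambda>n. bp n x)"
proof (rule CauchyI)
  fix e :: real assume e: "0 < e"
  obtain L where L: "(\<lambda>n. u n x) \<longlonglongrightarrow> L" using u_conv by blast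
  obtain N where N: "\<forall>n\<ge>N. norm (u n x - L) < e^2/4" using LIMSEQ_D[OF L, of "e^2/4"] e by auto
  show "\<exists>M. \<forall>m\<ge>M. \<forall>n\<ge>M. norm (bp m x - bp n x) < e"
  proof (intro exI allI impI)
    fix m n assume m: "m \<ge> N" and n: "n \<ge> N"
    have "ci (bp m x - bp n x) (bp m x - bp n x) =
          ci x (bp (m + m) x) - ci x (bp (m + n) x) - ci x (bp (n + m) x) + ci x (bp (n + n) x)"
      by (simp add: ci_diff_left ci_diff_right bp_ci algebra_simps)
    hence "Re (ci (bp m x - bp n x) (bp m x - bp n x)) = u (m + m) x - u (m + n) x - u (n + m) x + u (n + n) x"
      by (simp add: u_def)
    hence "(norm (bp m x - bp n x))^2 = u (m + m) x - u (m + n) x - u (n + m) x + u (n + n) x"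
      by (simp only: Re_ci_self)
    also have "\<dots> < e^2"
      using N m n by (simp add: add.commute[of n m]) (smt (verit) le_add2 le_trans)
    finally have "(norm (bp m x - bp n x))^2 < e^2" .
    thus "norm (bp m x - bp n x) < e" using e by (auto intro: power_less_imp_less_base)
  qed
qed

definition e :: "'i op" where "e x = lim (\<lambda>n. bp n x)"

lemma e_lim: "(\<lambda>n. bp n x) \<longlonglongrightarrow> e x"
  unfolding e_def using bp_cauchy Cauchy_convergent_iff convergent_LIMSEQ_iff by blast

end



lemma Im_ci_self: "Im (ci x x) = 0"
  using ci_self[of x] by (metis Im_complex_of_real)

context setting
begin

lemma e_add: "e (x + y) = e x + e y"
proof -
  have "(\<lambda>n. bp n (x + y)) \<longlonglongrightarrow> e x + e y"
    unfolding bop_add[OF bpb] by (intro tendsto_add e_lim)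
  thus ?thesis using e_lim LIMSEQ_unique by blast
qed

lemma e_cs: "e (cs c x) = cs c (e x)"
proof -
  have "(\<lambda>n. bp n (cs c x)) \<longlonglongrightarrow> cs c (e x)"
    unfolding bop_cs[OF bpb] by (intro cs_tendsto e_lim)
  thus ?thesis using e_lim LIMSEQ_unique by blast
qed

lemma e_norm: "norm (e x) \<le> norm x"
proof -
  have "(\<lambda>n. norm (bp n x)) \<longlonglongrightarrow> norm (e x)" by (intro tendsto_norm e_lim)
  thus ?thesis by (rule LIMSEQ_le_const2) (auto intro: bp_norm)
qed

lemma eb: "bounded_op e"
  by (rule bop_intro[where K=1]) (auto simp: e_add e_cs e_norm)

lemma he: "herm e"
  unfolding herm_def
proof (intro allI)
  fix x y
  have l1: "(\<lambda>n. ci x (bp n y)) \<longlonglongrightarrow> ci x (e y)" by (intro ci_tendsto_right e_lim)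
  have "(\<lambda>n. ci (bp n x) y) \<longlonglongrightarrow> ci (e x) y" by (intro ci_tendsto_left e_lim)
  moreover have "ci (bp n x) y = ci x (bp n y)" for n using hbp[of n] by (simp add: herm_def)
  ultimately have l2: "(\<lambda>n. ci x (bp n y)) \<longlonglongrightarrow> ci (e x) y" by simp
  show "ci x (e y) = ci (e x) y" using l1 l2 LIMSEQ_unique by blast
qed

lemma b_e: "b (e x) = e x"
proof -
  have l1: "(\<lambda>n. b (bp n x)) \<longlonglongrightarrow> b (e x)" by (intro bop_tendsto[OF bb] e_lim)
  have "(\<lambda>n. bp (Suc n) x) \<longlonglongrightarrow> e x" using e_lim by (rule LIMSEQ_Suc)
  hence "(\<lambda>n. b (bp n x)) \<longlonglongrightarrow> e x" by (simp add: bp_Suc)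
  thus ?thesis using l1 LIMSEQ_unique by blast
qed

lemma bp_e: "bp n (e x) = e x"
  by (induction n) (auto simp: bp_Suc b_e)

lemma e_e: "e (e x) = e x"
proof -
  have "(\<lambda>n. bp n (e x)) \<longlonglongrightarrow> e x" by (simp add: bp_e)
  thus ?thesis using e_lim LIMSEQ_unique by blast
qed

lemma a_e: "a (e x) = 0"
proof -
  have "e x - (1/K) *\<^sub>R a (e x) = e x" using b_e[of x] by (simp add: b_apply)
  hence "(1/K) *\<^sub>R a (e x) = 0" by simp
  thus ?thesis using K0 by simp
qed

lemma comm_b: "bounded_op Y \<Longrightarrow> (\<And>z. Y (a z) = a (Y z)) \<Longrightarrow> Y (b x) = b (Y x)"
  by (simp add: b_apply bop_diff bop_scaleR)

lemma comm_bp: "bounded_op Y \<Longrightarrow> (\<And>z. Y (a z) = a (Y z)) \<Longrightarrow> Y (bp n x) = bp n (Y x)"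
  by (induction n arbitrary: x) (auto simp: bp_Suc comm_b)

lemma comm_e: assumes "bounded_op Y" "\<And>z. Y (a z) = a (Y z)" shows "Y (e x) = e (Y x)"
proof -
  have "(\<lambda>n. Y (bp n x)) \<longlonglongrightarrow> Y (e x)" by (intro bop_tendsto[OF assms(1)] e_lim)
  hence "(\<lambda>n. bp n (Y x)) \<longlonglongrightarrow> Y (e x)" using comm_bp[OF assms] by simp
  thus ?thesis using e_lim LIMSEQ_unique by metis
qed

lemma e_a: "e (a x) = 0"
proof -
  have "a (e x) = e (a x)" by (rule comm_e[OF ba]) simp
  thus ?thesis using a_e by simp
qed

lemma eA: "e \<in> A"
proof -
  have "e \<in> commutant (commutant A)"
    unfolding commutant_def
  proof (intro CollectI conjI ballI)
    show "e \<in> BH" using eb by (simp add: BH_iff)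
    fix Y assume Y: "Y \<in> {Y \<in> BH. \<forall>X\<in>A. X \<circ> Y = Y \<circ> X}"
    hence bY: "bounded_op Y" by (simp add: BH_iff)
    have "a \<circ> Y = Y \<circ> a" using Y aA by blast
    hence c: "Y (a z) = a (Y z)" for z by (metis comp_apply)
    show "Y \<circ> e = e \<circ> Y" by (rule ext) (simp add: comm_e[OF bY c])
  qed
  thus ?thesis using A_cc by simp
qed

definition q :: "'i op" where "q = op_minus id e"

lemma q_apply: "q x = x - e x" by (simp add: q_def)
lemma qA: "q \<in> A" unfolding q_def by (intro A_minus A_id eA)
lemma hq: "herm q"
  using he by (simp add: herm_def q_apply ci_diff_left ci_diff_right)
lemma q_proj: "is_projection q"
  unfolding is_projection_def
proof (intro conjI)
  show bq: "q \<in> BH" using A_bop qA by (simp add: BH_iff)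
  show "q \<circ> q = q" by (rule ext) (simp add: q_apply bop_diff[OF eb] e_e)
  show "adj q = q" using herm_adj bq hq by (simp add: BH_iff)
qed

lemma a_q: "a = q \<circ> a \<circ> q"
  by (rule ext) (simp add: q_apply bop_diff[OF ba] a_e e_a)

lemma pA: "p \<in> A" using supp by (simp add: is_support_def)
lemma p_proj: "is_projection p" using supp by (simp add: is_support_def)
lemma bp_p: "bounded_op p" using p_proj by (simp add: is_projection_def BH_iff)
lemma hp: "herm p" using p_proj bp_p by (intro adj_self_herm) (auto simp: is_projection_def)
lemma p_idem: "p (p x) = p x" using p_proj by (metis comp_apply is_projection_def)
lemma a_p: "a = p \<circ> a \<circ> p" using supp by (simp add: is_support_def)
lemma p_le_q: "op_le p q" using supp qA q_proj a_q by (simp add: is_support_def)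

lemma p_re_im: "Im (ci x (p x)) = 0" using herm_real[OF hp] .

lemma p_e: "p (e v) = 0"
proof -
  define w where "w = e v"
  have "Re (ci w (p w)) \<le> Re (ci w (q w))" using p_le_q by (simp add: op_le_iff)
  also have "ci w (q w) = 0" by (simp add: w_def q_apply e_e)
  also have "ci w (p w) = ci (p w) (p w)" using hp p_idem by (metis herm_def)
  finally have "(norm (p w))^2 \<le> 0" by (simp add: Re_ci_self)
  thus ?thesis by (simp add: w_def)
qed

lemma e_p: "e (p x) = 0"
proof -
  define z where "z = e (p x)"
  have "ci z (e (p x)) = ci (e z) (p x)" using he by (simp add: herm_def)
  also have "\<dots> = ci (p (e z)) x" using hp by (simp add: herm_def)
  also have "\<dots> = 0" by (simp add: p_e)
  finally have "ci z z = 0" by (simp add: z_def)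
  thus ?thesis by (simp add: z_def ci_self)
qed

lemma u_p_lim: "(\<lambda>n. u n (p x)) \<longlonglongrightarrow> 0"
proof -
  have "(\<lambda>n. Re (ci (p x) (bp n (p x)))) \<longlonglongrightarrow> Re (ci (p x) (e (p x)))"
    by (intro tendsto_Re ci_tendsto_right e_lim)
  thus ?thesis by (simp add: u_def e_p)
qed

lemma a_v: "a (x - p x) = 0"
proof -
  have "a (x - p x) = p (a (p (x - p x)))" using a_p by (metis comp_apply)
  also have "p (x - p x) = 0" by (simp add: bop_diff[OF bp_p] p_idem)
  finally show ?thesis by (simp add: bop_zero[OF ba] bop_zero[OF bp_p])
qed

lemma bp_v: "bp n (x - p x) = x - p x"
proof (induction n)
  case 0 thus ?case by simp
next
  case (Suc n) thus ?case by (simp add: bp_Suc b_apply a_v)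
qed

definition dn :: "nat \<Rightarrow> 'i op" where "dn n = op_minus id (bp n)"
lemma dn_apply: "dn n x = x - bp n x" by (simp add: dn_def)
lemma dnA: "dn n \<in> A" unfolding dn_def by (intro A_minus A_id bpA)

lemma key_id: "ci x (dn n x) = ci x (p x) - ci (p x) (bp n (p x))"
proof -
  define v where "v = x - p x"
  have xv: "x = p x + v" by (simp add: v_def)
  have "bp n x = bp n (p x) + bp n v" by (subst (1) xv) (rule bop_add[OF bpb])
  hence "bp n x = bp n (p x) + v" using bp_v[of n x] by (simp add: v_def)
  hence "x - bp n x = p x - bp n (p x)" by (simp add: v_def)
  hence "ci x (dn n x) = ci x (p x) - ci x (bp n (p x))" by (simp add: dn_apply ci_diff_right)
  also have "ci x (bp n (p x)) = ci (p x) (bp n (p x)) + ci v (bp n (p x))"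
    by (subst (1) xv, simp add: ci_add_left)
  also have "ci v (bp n (p x)) = ci (bp n v) (p x)" using hbp[of n] by (simp add: herm_def)
  also have "\<dots> = ci v (p x)" by (simp add: v_def bp_v)
  also have "\<dots> = 0"
  proof -
    have "ci (p x) (p x) = ci x (p (p x))" using hp by (simp add: herm_def)
    thus ?thesis by (simp add: v_def ci_diff_left p_idem)
  qed
  finally show ?thesis by simp
qed

lemma re_dn: "Re (ci x (dn n x)) = Re (ci x (p x)) - u n (p x)"
  by (simp add: key_id u_def)
lemma im_dn: "Im (ci x (dn n x)) = 0"
  by (simp add: dn_apply ci_diff_right ci_self bp_im)
lemma re_dn2: "Re (ci x (dn n x)) = (norm x)^2 - u n x"
  by (simp add: dn_apply ci_diff_right u_def Re_ci_self)

lemma dn_pos: "op_pos (dn n)"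
  unfolding op_pos_iff using im_dn re_dn2 u_le by simp

lemma dn_mono: "n \<le> m \<Longrightarrow> op_le (dn n) (dn m)"
  unfolding op_le_iff using im_dn re_dn2 u_mono by simp

lemma dn_le_id: "op_le (dn n) id"
  unfolding op_le_iff using im_dn re_dn2 u_nonneg by (simp add: Re_ci_self Im_ci_self)

lemma dn_le_p: "op_le (dn n) p"
  unfolding op_le_iff using im_dn re_dn u_nonneg p_re_im by simp

lemma p_lub: assumes "\<And>n. op_le (dn n) c" shows "op_le p c"
  unfolding op_le_iff
proof
  fix x
  have "Im (ci x (c x)) = 0" using assms[of 0] im_dn by (simp add: op_le_iff)
  moreover have "Re (ci x (p x)) \<le> Re (ci x (c x))"
  proof -
    have "(\<lambda>n. Re (ci x (p x)) - u n (p x)) \<longlonglongrightarrow> Re (ci x (p x)) - 0"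
      by (intro tendsto_diff tendsto_const u_p_lim)
    moreover have "Re (ci x (p x)) - u n (p x) \<le> Re (ci x (c x))" for n
      using assms[of n] re_dn[of x n] unfolding op_le_iff by metis
    ultimately show ?thesis by (auto intro: LIMSEQ_le_const2)
  qed
  ultimately show "Im (ci x (p x)) = Im (ci x (c x)) \<and> Re (ci x (p x)) \<le> Re (ci x (c x))"
    using p_re_im by simp
qed

lemma dn_bern: "op_le (dn n) (op_scale (of_real (real n / K)) a)"
  unfolding op_le_iff
proof
  fix x
  have "Re (ci x (dn n x)) = u 0 x - u n x" by (simp add: re_dn2 u_0)
  also have "\<dots> \<le> real n * (u 0 x - u 1 x)" by (rule u_bern)
  also have "\<dots> = Re (ci x (op_scale (of_real (real n / K)) a x))"
    using u_1[of x] by (simp add: u_0 ci_scale_right)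
  finally show "Im (ci x (dn n x)) = Im (ci x (op_scale (of_real (real n / K)) a x)) \<and>
      Re (ci x (dn n x)) \<le> Re (ci x (op_scale (of_real (real n / K)) a x))"
    using im_dn a_im by (simp add: ci_scale_right)
qed

end



lemma matrix_pos_1: "matrix_pos 1 M \<longleftrightarrow> (\<forall>x. cnonneg (ci x (M 0 0 x)))"
proof -
  have s: "(\<Sum>i<1. \<Sum>j<1. ci (\<xi> i) (M i j (\<xi> j))) = ci (\<xi> 0) (M 0 0 (\<xi> 0))" for \<xi>
    by (simp add: lessThan_Suc)
  show ?thesis unfolding matrix_pos_def s
  proof
    assume h: "\<forall>\<xi>. cnonneg (ci (\<xi> 0) (M 0 0 (\<xi> 0)))"
    show "\<forall>x. cnonneg (ci x (M 0 0 x))"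
    proof
      fix x show "cnonneg (ci x (M 0 0 x))" using h[rule_format, of "\<lambda>_. x"] by simp
    qed
  qed auto
qed

locale markov_setting = setting +
  fixes T :: "'a op \<Rightarrow> 'a op"
  assumes mk: "markov_operator A T" and Ta: "op_le (T a) a"
begin

lemma T_A: "X \<in> A \<Longrightarrow> T X \<in> A" using mk by (simp add: markov_operator_def)
lemma T_add: "X \<in> A \<Longrightarrow> Y \<in> A \<Longrightarrow> T (op_add X Y) = op_add (T X) (T Y)"
  using mk by (simp add: markov_operator_def)
lemma T_scale: "X \<in> A \<Longrightarrow> T (op_scale c X) = op_scale c (T X)"
  using mk by (simp add: markov_operator_def)
lemma T_id: "T id = id" using mk by (simp add: markov_operator_def)
lemma T_minus: "X \<in> A \<Longrightarrow> Y \<in> A \<Longrightarrow> T (op_minus X Y) = op_minus (T X) (T Y)"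
  unfolding op_minus_def by (simp add: T_add T_scale A_scale)

lemma T_pos: assumes X: "X \<in> A" and pX: "op_pos X" shows "op_pos (T X)"
proof -
  have cp: "completely_positive A T" using mk by (simp add: markov_operator_def)
  have m1: "matrix_pos 1 (\<lambda>i j. X)" unfolding matrix_pos_1 using pX unfolding op_pos_def .
  have "matrix_pos 1 (\<lambda>i j. T X)"
    using spec[OF spec[OF cp[unfolded completely_positive_def], of 1], of "\<lambda>i j. X"] m1 X by simp
  hence "cnonneg (ci x (T X x))" for x unfolding matrix_pos_1 by simp
  thus ?thesis by (simp add: op_pos_def)
qed

lemma T_mono: "X \<in> A \<Longrightarrow> Y \<in> A \<Longrightarrow> op_le X Y \<Longrightarrow> op_le (T X) (T Y)"
  unfolding op_le_def using T_pos[of "op_minus Y X"] A_minus T_minus by simp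

lemma Tdn_le_p: "op_le (T (dn n)) p"
proof -
  define t where "t = T (dn n)"
  have tA: "t \<in> A" unfolding t_def by (intro T_A dnA)
  have bt: "bounded_op t" using A_bop tA .
  have pt: "op_pos t" unfolding t_def by (intro T_pos dnA dn_pos)
  have ht: "herm t" using pos_herm[OF bt pt] .
  have t_id: "op_le t id" unfolding t_def using T_mono[OF dnA A_id dn_le_id] T_id by simp
  define c where "c = real n / K"
  have c0: "c \<ge> 0" using K0 by (simp add: c_def)
  have t_a: "op_le t (op_scale (of_real c) (T a))" unfolding t_def c_def
    using T_mono[OF dnA A_scale[OF aA] dn_bern] T_scale[OF aA] by simp
  have Ta': "op_le (T a) a" by (rule Ta)
  have tv: "t (x - p x) = 0" for x
  proof -
    define v where "v = x - p x"
    have "Re (ci v (t v)) \<le> Re (ci v (cs (of_real c) (T a v)))" using t_a by (simp add: op_le_iff)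
    also have "\<dots> = c * Re (ci v (T a v))" by (simp add: ci_scale_right)
    also have "\<dots> \<le> c * Re (ci v (a v))" using Ta' c0 by (intro mult_left_mono) (auto simp: op_le_iff)
    also have "\<dots> = 0" by (simp add: v_def a_v)
    finally have "Re (ci v (t v)) \<le> 0" .
    moreover have "Im (ci v (t v)) = 0" "0 \<le> Re (ci v (t v))" using pt by (auto simp: op_pos_iff)
    ultimately have "ci v (t v) = 0" by (simp add: complex_eq_iff)
    thus ?thesis using pos_zero_kill[OF bt pt] by (simp add: v_def)
  qed
  show ?thesis unfolding t_def[symmetric] op_le_iff
  proof
    fix x
    define v where "v = x - p x"
    have xv: "x = p x + v" by (simp add: v_def)
    have tx: "t x = t (p x)"
    proof -
      have "t x = t (p x) + t v" by (subst (1) xv) (rule bop_add[OF bt])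
      thus ?thesis using tv by (simp add: v_def)
    qed
    have "ci x (t x) = ci (p x) (t (p x)) + ci v (t (p x))"
      unfolding tx by (subst (1) xv) (simp add: ci_add_left)
    also have "ci v (t (p x)) = ci (t v) (p x)" using ht by (simp add: herm_def)
    also have "\<dots> = 0" using tv by (simp add: v_def)
    finally have e1: "ci x (t x) = ci (p x) (t (p x))" by simp
    have "Re (ci (p x) (t (p x))) \<le> Re (ci (p x) (p x))" using t_id by (simp add: op_le_iff)
    also have "ci (p x) (p x) = ci x (p x)" using hp p_idem by (metis herm_def)
    finally have "Re (ci x (t x)) \<le> Re (ci x (p x))" using e1 by simp
    moreover have "Im (ci x (t x)) = 0" using pt by (simp add: op_pos_iff)
    ultimately show "Im (ci x (t x)) = Im (ci x (p x)) \<and> Re (ci x (t x)) \<le> Re (ci x (p x))"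
      using p_re_im by simp
  qed
qed

lemma main: "op_le (T p) p"
proof -
  define D where "D = range dn"
  have nm: "normal_map A T" using mk by (simp add: markov_operator_def)
  have lub: "op_is_lub D p"
    unfolding op_is_lub_def
  proof (intro conjI ballI impI)
    show "p \<in> BH" using bp_p by (simp add: BH_iff)
    fix x assume "x \<in> D" thus "op_le x p" using dn_le_p by (auto simp: D_def)
  next
    fix c assume "c \<in> BH" "\<forall>x\<in>D. op_le x c"
    thus "op_le p c" by (intro p_lub) (auto simp: D_def)
  qed
  have hyp: "D \<subseteq> A \<and> D \<noteq> {} \<and> (\<forall>x\<in>D. op_pos x) \<and>
          (\<forall>x\<in>D. \<forall>y\<in>D. \<exists>z\<in>D. op_le x z \<and> op_le y z) \<and>
          (\<exists>b\<in>BH. \<forall>x\<in>D. op_le x b)"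
  proof (intro conjI)
    show "D \<subseteq> A" using dnA by (auto simp: D_def)
    show "D \<noteq> {}" by (simp add: D_def)
    show "\<forall>x\<in>D. op_pos x" using dn_pos by (auto simp: D_def)
    show "\<forall>x\<in>D. \<forall>y\<in>D. \<exists>z\<in>D. op_le x z \<and> op_le y z"
    proof (intro ballI)
      fix x y assume "x \<in> D" "y \<in> D"
      then obtain n m where "x = dn n" "y = dn m" by (auto simp: D_def)
      thus "\<exists>z\<in>D. op_le x z \<and> op_le y z"
        by (intro bexI[where x="dn (max n m)"]) (auto simp: D_def intro: dn_mono)
    qed
    show "\<exists>b\<in>BH. \<forall>x\<in>D. op_le x b"
      using A_bop A_id dn_le_id by (intro bexI[where x=id]) (auto simp: D_def BH_iff)
  qed
  have "op_is_lub (T ` D) (T p)" using nm hyp lub unfolding normal_map_def by blast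
  moreover have "\<forall>x\<in>T ` D. op_le x p" using Tdn_le_p by (auto simp: D_def)
  moreover have "p \<in> BH" using bp_p by (simp add: BH_iff)
  ultimately show ?thesis unfolding op_is_lub_def by blast
qed

end

theorem proposition3p9:
  fixes A :: "'i op set" and T :: "'i op \<Rightarrow> 'i op" and a p :: "'i op"
  assumes "von_neumann_algebra A"
    and "markov_operator A T"
    and "a \<in> A" and "op_pos a"
    and "op_le (T a) a"
    and "is_support A a p"
  shows "op_le (T p) p"
proof -
  have "a \<in> BH" using assms(1,3) by (auto simp: von_neumann_algebra_def)
  then obtain K where K0: "K > 0" and Kb: "\<And>x. norm (a x) \<le> K * norm x"
    using bop_bound by (auto simp: BH_iff)
  interpret markov_setting A a p K T
    using assms K0 Kb by unfold_locales auto
  show ?thesis by (rule main)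
qed



end
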